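(* (1) If a nonzero element of $T_n\cap\mathbb{Q}[\boldsymbol{\theta}_n]$ is antisymmetric, then it has degree exactly $n-1$. (2) If a nonzero element of $T_n\cap\mathbb{Q}[\boldsymbol{\theta}_n,\boldsymbol{\xi}_n]$ is antisymmetric, then it has degree exactly $n-1$.
   Context: Let $\mathbb{Q}[\boldsymbol{\theta}_n,\boldsymbol{\xi}_n,\boldsymbol{\rho}_n]$ be the $\mathbb{Q}$-algebra generated by $3n$ pairwise anticommuting variables $\theta_i,\xi_i,\rho_i$ ($1\le i\le n$), with $\mathfrak{S}_n$ acting by permuting indices simultaneously in all three sets; $\mathbb{Q}[\boldsymbol{\theta}_n]$ and $\mathbb{Q}[\boldsymbol{\theta}_n,\boldsymbol{\xi}_n]$ are the subalgebras generated by the $\theta$'s, resp. the $\theta$'s and $\xi$'s. An element $p$ is antisymmetric if $\sigma(p)=\mathrm{sgn}(\sigma)p$ for all $\sigma\in\mathfrak{S}_n$. Derivatives: for a variable $\alpha_j$, $\partial_{\alpha_j}(\alpha_{i_1}\cdots\alpha_{i_k})=(-1)^{\ell-1}\alpha_{i_1}\cdots\widehat{\alpha_{i_\ell}}\cdots\alpha_{i_k}$ if $\alpha_j$ is the $\ell$-th factor and $0$ otherwise. $T_n:=\{f:\sum_{i=1}^n\partial_{\theta_i}^h\partial_{\xi_i}^k\partial_{\rho_i}^\ell f=0\ \forall h,k,\ell\ge0,\ h+k+\ell>0\}$. Degree means total degree in the variables. *)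

theory Defs
  imports Complex_Main "HOL-Library.Product_Lexorder" "HOL-Combinatorics.Permutations"
begin

text \<open>Variables: (0,i) = theta_i, (1,i) = xi_i, (2,i) = rho_i, for 1 <= i <= n. An element of the exterior
  algebra is represented by its coefficient function on monomials: a finite set S of
  variables stands for the product of its elements in increasing order.\<close>

type_synonym var = "nat \<times> nat"
type_synonym ext = "var set \<Rightarrow> rat"

definition vars :: "nat set \<Rightarrow> nat \<Rightarrow> var set" where
  "vars K n = K \<times> {1..n}"

definition in_alg :: "nat set \<Rightarrow> nat \<Rightarrow> ext \<Rightarrow> bool" where
  "in_alg K n f \<longleftrightarrow> (\<forall>S. f S \<noteq> 0 \<longrightarrow> S \<subseteq> vars K n)"

text \<open>Left derivative with respect to a variable a: on a monomial, if a is the l-th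
  factor, remove it with sign (-1)^(l-1).\<close>
definition pd :: "var \<Rightarrow> ext \<Rightarrow> ext" where
  "pd a f S = (if a \<in> S then 0
      else (-1) ^ card {b \<in> S. b < a} * f (insert a S))"

definition T_space :: "nat \<Rightarrow> ext set" where
  "T_space n = {f. \<forall>h k l. h + k + l > 0 \<longrightarrow>
      (\<forall>S. (\<Sum>i = 1..n. ((pd (0, i)) ^^ h) (((pd (1, i)) ^^ k) (((pd (2, i)) ^^ l) f)) S) = 0)}"

definition vmap :: "(nat \<Rightarrow> nat) \<Rightarrow> var \<Rightarrow> var" where
  "vmap \<sigma> v = (fst v, \<sigma> (snd v))"

definition ninv :: "(nat \<Rightarrow> nat) \<Rightarrow> var set \<Rightarrow> nat" where
  "ninv \<sigma> S = card {(a, b). a \<in> S \<and> b \<in> S \<and> a < b \<and> vmap \<sigma> b < vmap \<sigma> a}"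

text \<open>sigma(x_S) = (-1)^(inversions) x_{sigma S}, extended linearly.\<close>
definition act :: "(nat \<Rightarrow> nat) \<Rightarrow> ext \<Rightarrow> ext" where
  "act \<sigma> f T = (let S = vmap (inv \<sigma>) ` T in (-1) ^ ninv \<sigma> S * f S)"

definition antisymmetric :: "nat \<Rightarrow> ext \<Rightarrow> bool" where
  "antisymmetric n f \<longleftrightarrow>
     (\<forall>\<sigma>. \<sigma> permutes {1..n} \<longrightarrow> act \<sigma> f = (\<lambda>T. of_int (sign \<sigma>) * f T))"

definition degree_ext :: "ext \<Rightarrow> nat" where
  "degree_ext f = Max {card S | S. f S \<noteq> 0}"

end

theory Submission
  imports Defs
begin



definition mon :: "nat set \<Rightarrow> nat set \<Rightarrow> var set" where
  "mon A B = Pair 0 ` A \<union> Pair 1 ` B"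

definition invs :: "(nat \<Rightarrow> nat) \<Rightarrow> nat set \<Rightarrow> (nat \<times> nat) set" where
  "invs \<sigma> X = {(x, y). x \<in> X \<and> y \<in> X \<and> x < y \<and> \<sigma> y < \<sigma> x}"

lemma ninv_mon:
  assumes fA: "finite A" and fB: "finite B"
  shows "ninv \<sigma> (mon A B) = card (invs \<sigma> A) + card (invs \<sigma> B)"
proof -
  let ?I = "{(a, b). a \<in> mon A B \<and> b \<in> mon A B \<and> a < b \<and> vmap \<sigma> b < vmap \<sigma> a}"
  let ?f0 = "\<lambda>(x::nat, y::nat). ((0::nat, x), (0::nat, y))"
  let ?f1 = "\<lambda>(x::nat, y::nat). ((1::nat, x), (1::nat, y))"
  have eq: "?I = ?f0 ` invs \<sigma> A \<union> ?f1 ` invs \<sigma> B"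
    unfolding invs_def mon_def vmap_def
    by (auto simp: less_prod_def' image_iff)
  have i0: "inj ?f0" by (auto simp: inj_def)
  have i1: "inj ?f1" by (auto simp: inj_def)
  have fin: "finite (invs \<sigma> A)" "finite (invs \<sigma> B)"
    by (rule finite_subset[of _ "A \<times> A"], auto simp: invs_def fA)
       (rule finite_subset[of _ "B \<times> B"], auto simp: invs_def fB)
  have "card ?I = card (?f0 ` invs \<sigma> A) + card (?f1 ` invs \<sigma> B)"
    unfolding eq by (rule card_Un_disjoint) (use fin in auto)
  also have "\<dots> = card (invs \<sigma> A) + card (invs \<sigma> B)"
    using card_image[OF inj_on_subset[OF i0]] card_image[OF inj_on_subset[OF i1]] by simp
  finally show ?thesis unfolding ninv_def .
qed

lemma invs_transpose:
  fixes i j :: nat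
  assumes ij: "i < j" and fin: "finite X"
  defines "C \<equiv> {x \<in> X. i < x \<and> x < j}"
  shows "card (invs (Transposition.transpose i j) X) =
     (if i \<in> X \<and> j \<in> X then 1 else 0) + (if i \<in> X then card C else 0) + (if j \<in> X then card C else 0)"
proof -
  let ?P1 = "if i \<in> X \<and> j \<in> X then {(i, j)} else {}"
  let ?P2 = "if i \<in> X then Pair i ` C else {}"
  let ?P3 = "if j \<in> X then (\<lambda>x. (x, j)) ` C else {}"
  have eq: "invs (Transposition.transpose i j) X = ?P1 \<union> ?P2 \<union> ?P3"
    using ij unfolding invs_def C_def
    by (auto simp: transpose_def split: if_splits)
  have fC: "finite C" using fin unfolding C_def by auto
  have d1: "?P1 \<inter> ?P2 = {}" using ij by (auto simp: C_def)
  have d2: "(?P1 \<union> ?P2) \<inter> ?P3 = {}" using ij by (auto simp: C_def)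
  have c2: "card ?P2 = (if i \<in> X then card C else 0)"
    by (auto simp: card_image inj_on_def)
  have c3: "card ?P3 = (if j \<in> X then card C else 0)"
    by (auto simp: card_image inj_on_def)
  have "card (?P1 \<union> ?P2 \<union> ?P3) = card (?P1 \<union> ?P2) + card ?P3"
    by (rule card_Un_disjoint) (use fC d2 in auto)
  also have "card (?P1 \<union> ?P2) = card ?P1 + card ?P2"
    by (rule card_Un_disjoint) (use fC d1 in auto)
  finally show ?thesis unfolding eq c2 c3 by simp
qed




lemma card_Pair[simp]: "card (Pair a ` X) = card X" by (simp add: card_image inj_on_def)

lemma mem_mon0[simp]: "((0, x) \<in> mon A B) = (x \<in> A)" by (auto simp: mon_def)
lemma mem_mon1[simp]: "((Suc 0, x) \<in> mon A B) = (x \<in> B)" by (auto simp: mon_def)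
lemma insert_mon0: "insert (0, x) (mon A B) = mon (insert x A) B" by (auto simp: mon_def)
lemma insert_mon1: "insert (Suc 0, x) (mon A B) = mon A (insert x B)" by (auto simp: mon_def)

lemma pd0_mon: "pd (0, x) f (mon A B) =
   (if x \<in> A then 0 else (-1) ^ card {y \<in> A. y < x} * f (mon (insert x A) B))"
proof -
  have "{b \<in> mon A B. b < (0, x)} = Pair 0 ` {y \<in> A. y < x}"
    by (auto simp: mon_def less_prod_def')
  then have "card {b \<in> mon A B. b < (0, x)} = card {y \<in> A. y < x}"
    by (simp add: card_image)
  then show ?thesis unfolding pd_def by (simp add: insert_mon0)
qed

lemma pd1_mon: assumes "finite A" "finite B"
  shows "pd (Suc 0, x) f (mon A B) =
   (if x \<in> B then 0 else (-1) ^ (card A + card {y \<in> B. y < x}) * f (mon A (insert x B)))"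
proof -
  have "{b \<in> mon A B. b < (Suc 0, x)} = Pair 0 ` A \<union> Pair (Suc 0) ` {y \<in> B. y < x}"
    by (auto simp: mon_def less_prod_def')
  moreover have "card (Pair 0 ` A \<union> Pair (Suc 0) ` {y \<in> B. y < x}) = card A + card {y \<in> B. y < x}"
    by (subst card_Un_disjoint) (auto simp: card_image assms)
  ultimately show ?thesis unfolding pd_def by (simp add: insert_mon1)
qed

lemma vmap_mon: "vmap \<sigma> ` mon A B = mon (\<sigma> ` A) (\<sigma> ` B)"
  by (simp add: mon_def image_Un image_image vmap_def)

lemma antisym_transp:
  assumes as: "antisymmetric n f" and ij: "i < j" "i \<in> {1..n}" "j \<in> {1..n}"
    and fin: "finite A" "finite B"
  shows "f (mon (Transposition.transpose i j ` A) (Transposition.transpose i j ` B)) =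
     - ((-1) ^ ninv (Transposition.transpose i j) (mon A B) * f (mon A B))"
proof -
  let ?t = "Transposition.transpose i j"
  have p: "?t permutes {1..n}" using ij by (intro permutes_swap_id) auto
  have s: "sign ?t = -1" using ij by (simp add: sign_swap_id)
  let ?T = "mon (?t ` A) (?t ` B)"
  have h: "act ?t f = (\<lambda>T. of_int (sign ?t) * f T)" using as p unfolding antisymmetric_def by blast
  have "act ?t f ?T = of_int (sign ?t) * f ?T" using h by simp
  moreover have "vmap (inv ?t) ` ?T = mon A B"
    by (simp add: vmap_mon image_image)
  ultimately have "(-1) ^ ninv ?t (mon A B) * f (mon A B) = of_int (sign ?t) * f ?T"
    unfolding act_def Let_def by metis
  then have "(-1) ^ ninv ?t (mon A B) * f (mon A B) = - f ?T"
    unfolding s by simp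
  then show "f ?T = - ((-1) ^ ninv ?t (mon A B) * f (mon A B))" by linarith
qed

lemma card_mon: "finite A \<Longrightarrow> finite B \<Longrightarrow> card (mon A B) = card A + card B"
  unfolding mon_def by (subst card_Un_disjoint) (auto simp: card_image)

lemma mon_repr:
  assumes "S \<subseteq> vars {0, 1} n"
  shows "S = mon {x. (0, x) \<in> S} {x. (Suc 0, x) \<in> S}"
    "{x. (0, x) \<in> S} \<subseteq> {1..n}" "{x. (Suc 0, x) \<in> S} \<subseteq> {1..n}"
proof -
  have k: "\<And>a b. (a, b) \<in> S \<Longrightarrow> (a = 0 \<or> a = Suc 0) \<and> b \<in> {1..n}"
  proof -
    fix a b assume "(a, b) \<in> S"
    then have "(a, b) \<in> {0, 1} \<times> {1..n}" using assms unfolding vars_def by blast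
    then show "(a = 0 \<or> a = Suc 0) \<and> b \<in> {1..n}" by auto
  qed
  show "S = mon {x. (0, x) \<in> S} {x. (Suc 0, x) \<in> S}"
  proof (rule set_eqI)
    fix v show "v \<in> S \<longleftrightarrow> v \<in> mon {x. (0, x) \<in> S} {x. (Suc 0, x) \<in> S}"
      using k[of "fst v" "snd v"] by (cases v) (auto simp: mon_def)
  qed
  show "{x. (0, x) \<in> S} \<subseteq> {1..n}" "{x. (Suc 0, x) \<in> S} \<subseteq> {1..n}" using k by auto
qed

lemma T_eqs:
  assumes "f \<in> T_space n"
  shows "(\<Sum>i = 1..n. pd (0, i) f S) = 0" "(\<Sum>i = 1..n. pd (Suc 0, i) f S) = 0"
    "(\<Sum>i = 1..n. pd (0, i) (pd (Suc 0, i) f) S) = 0"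
proof -
  have *: "\<forall>h k l. h + k + l > 0 \<longrightarrow>
      (\<forall>S. (\<Sum>i = 1..n. ((pd (0, i)) ^^ h) (((pd (1, i)) ^^ k) (((pd (2, i)) ^^ l) f)) S) = 0)"
    using assms unfolding T_space_def by (rule CollectD)
  show "(\<Sum>i = 1..n. pd (0, i) f S) = 0" using *[rule_format, of 1 0 0 S] by simp
  show "(\<Sum>i = 1..n. pd (Suc 0, i) f S) = 0" using *[rule_format, of 0 1 0 S] by simp
  show "(\<Sum>i = 1..n. pd (0, i) (pd (Suc 0, i) f) S) = 0" using *[rule_format, of 1 1 0 S] by simp
qed




lemma neg1_even: "(-1::rat) ^ (k + 2 * m) = (-1) ^ k"
  by (simp add: power_add power_mult)

lemma neg1_sq: "(-1::rat) ^ k * (-1) ^ k = 1"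
  by (induct k) auto

lemma cnt_split:
  fixes X :: "nat set"
  assumes "finite X" "u < v" "u \<notin> X"
  shows "card {x \<in> X. x < v} = card {x \<in> X. x < u} + card {x \<in> X. u < x \<and> x < v}"
proof -
  have "{x \<in> X. x < v} = {x \<in> X. x < u} \<union> {x \<in> X. u < x \<and> x < v}"
    using assms by auto (metis linorder_neqE_nat)
  moreover have "card ({x \<in> X. x < u} \<union> {x \<in> X. u < x \<and> x < v}) =
     card {x \<in> X. x < u} + card {x \<in> X. u < x \<and> x < v}"
    by (rule card_Un_disjoint) (use assms in auto)
  ultimately show ?thesis by simp
qed

locale setting =
  fixes n :: nat and f :: ext
  assumes as: "antisymmetric n f" and T: "f \<in> T_space n"
begin

abbreviation "g A B \<equiv> f (mon A B)"

lemma two_empty: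
  assumes "i < j" "i \<in> {1..n}" "j \<in> {1..n}" "finite A" "finite B"
    "i \<notin> A" "j \<notin> A" "i \<notin> B" "j \<notin> B"
  shows "g A B = 0"
proof -
  have "g A B = - ((-1) ^ ninv (Transposition.transpose i j) (mon A B) * g A B)"
    using antisym_transp[OF as assms(1-5)] assms(6-9) by simp
  moreover have "ninv (Transposition.transpose i j) (mon A B) = 0"
    using assms by (simp add: ninv_mon invs_transpose)
  ultimately show ?thesis by simp
qed

lemma two_full:
  assumes "i < j" "i \<in> {1..n}" "j \<in> {1..n}" "finite A" "finite B"
    "i \<in> A" "j \<in> A" "i \<in> B" "j \<in> B"
  shows "g A B = 0"
proof -
  have "g A B = - ((-1) ^ ninv (Transposition.transpose i j) (mon A B) * g A B)"
    using antisym_transp[OF as assms(1-5)] assms(6-9) by simp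
  moreover have "(-1::rat) ^ ninv (Transposition.transpose i j) (mon A B) = 1"
  proof -
    let ?cA = "card {x \<in> A. i < x \<and> x < j}" and ?cB = "card {x \<in> B. i < x \<and> x < j}"
    have "ninv (Transposition.transpose i j) (mon A B) = 0 + 2 * (1 + ?cA + ?cB)"
      using assms by (simp add: ninv_mon invs_transpose)
    then show ?thesis by (simp only: neg1_even) simp
  qed
  ultimately show ?thesis by simp
qed

lemma alleq0_lt:
  assumes "j < j'" "j \<in> {1..n}" "j' \<in> {1..n}" "finite A" "finite B"
    "j \<in> B" "j' \<in> B" "j \<notin> A" "j' \<notin> A"
  shows "(-1) ^ card {x \<in> A. x < j} * g (insert j A) B =
         (-1) ^ card {x \<in> A. x < j'} * g (insert j' A) B"
proof -
  let ?t = "Transposition.transpose j j'"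
  let ?c = "card {x \<in> A. j < x \<and> x < j'}" and ?cB = "card {x \<in> B. j < x \<and> x < j'}"
  have im: "?t ` insert j A = insert j' A" "?t ` B = B"
    using assms by (auto simp: transpose_image_eq)
  have cc: "{x. (x = j \<or> x \<in> A) \<and> j < x \<and> x < j'} = {x \<in> A. j < x \<and> x < j'}" by auto
  have "ninv ?t (mon (insert j A) B) = ?c + 2 * (?cB) + 1"
    using assms by (simp add: ninv_mon invs_transpose cc)
  then have "g (insert j' A) B = (-1) ^ ?c * g (insert j A) B"
    using antisym_transp[OF as assms(1-3), of "insert j A" B] assms(4,5) im
    by (simp add: neg1_even)
  moreover have "card {x \<in> A. x < j'} = card {x \<in> A. x < j} + ?c"
    by (rule cnt_split) (use assms in auto)
  ultimately show ?thesis
    by (simp add: power_add)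
qed

lemma alleq0:
  assumes "j \<in> {1..n}" "j' \<in> {1..n}" "finite A" "finite B"
    "j \<in> B" "j' \<in> B" "j \<notin> A" "j' \<notin> A"
  shows "(-1) ^ card {x \<in> A. x < j} * g (insert j A) B =
         (-1) ^ card {x \<in> A. x < j'} * g (insert j' A) B"
proof (cases j j' rule: linorder_cases)
  case less show ?thesis by (rule alleq0_lt[OF less assms])
next
  case equal then show ?thesis by simp
next
  case greater show ?thesis using alleq0_lt[OF greater assms(2,1,3,4,6,5,8,7)] by (rule sym)
qed

lemma alleq1_lt:
  assumes "j < j'" "j \<in> {1..n}" "j' \<in> {1..n}" "finite A" "finite B"
    "j \<in> A" "j' \<in> A" "j \<notin> B" "j' \<notin> B"
  shows "(-1) ^ card {x \<in> B. x < j} * g A (insert j B) =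
         (-1) ^ card {x \<in> B. x < j'} * g A (insert j' B)"
proof -
  let ?t = "Transposition.transpose j j'"
  let ?c = "card {x \<in> B. j < x \<and> x < j'}" and ?cA = "card {x \<in> A. j < x \<and> x < j'}"
  have im: "?t ` insert j B = insert j' B" "?t ` A = A"
    using assms by (auto simp: transpose_image_eq)
  have cc: "{x. (x = j \<or> x \<in> B) \<and> j < x \<and> x < j'} = {x \<in> B. j < x \<and> x < j'}" by auto
  have "ninv ?t (mon A (insert j B)) = ?c + 2 * (?cA) + 1"
    using assms by (simp add: ninv_mon invs_transpose cc)
  then have "g A (insert j' B) = (-1) ^ ?c * g A (insert j B)"
    using antisym_transp[OF as assms(1-3), of A "insert j B"] assms(4,5) im
    by (simp add: neg1_even)
  moreover have "card {x \<in> B. x < j'} = card {x \<in> B. x < j} + ?c"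
    by (rule cnt_split) (use assms in auto)
  ultimately show ?thesis
    by (simp add: power_add)
qed

lemma alleq1:
  assumes "j \<in> {1..n}" "j' \<in> {1..n}" "finite A" "finite B"
    "j \<in> A" "j' \<in> A" "j \<notin> B" "j' \<notin> B"
  shows "(-1) ^ card {x \<in> B. x < j} * g A (insert j B) =
         (-1) ^ card {x \<in> B. x < j'} * g A (insert j' B)"
proof (cases j j' rule: linorder_cases)
  case less show ?thesis by (rule alleq1_lt[OF less assms])
next
  case equal then show ?thesis by simp
next
  case greater show ?thesis using alleq1_lt[OF greater assms(2,1,3,4,6,5,8,7)] by (rule sym)
qed

end


context setting begin

lemma swapE:
  assumes "i < j" "i \<in> {1..n}" "j \<in> {1..n}" "finite A" "finite B"
    "i \<notin> A" "j \<notin> A" "i \<notin> B" "j \<notin> B"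
  shows "g (insert j A) (insert i B) =
    - ((-1) ^ (card {x \<in> A. i < x \<and> x < j} + card {x \<in> B. i < x \<and> x < j})
       * g (insert i A) (insert j B))"
proof -
  let ?t = "Transposition.transpose i j"
  have im: "?t ` insert i A = insert j A" "?t ` insert j B = insert i B"
    using assms by (auto simp: transpose_image_eq)
  have cc: "{x. (x = i \<or> x \<in> A) \<and> i < x \<and> x < j} = {x \<in> A. i < x \<and> x < j}"
     "{x. (x = j \<or> x \<in> B) \<and> i < x \<and> x < j} = {x \<in> B. i < x \<and> x < j}" by auto
  have N: "ninv ?t (mon (insert i A) (insert j B)) =
     card {x \<in> A. i < x \<and> x < j} + card {x \<in> B. i < x \<and> x < j}"
    using assms by (simp add: ninv_mon invs_transpose cc)
  have "g (?t ` insert i A) (?t ` insert j B) = - ((-1) ^ ninv ?t (mon (insert i A) (insert j B))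
       * g (insert i A) (insert j B))"
    by (rule antisym_transp[OF as assms(1-3)]) (use assms in auto)
  then show ?thesis unfolding im N .
qed


lemma pd01_mon: "finite A \<Longrightarrow> finite B \<Longrightarrow> pd (0, i) (pd (Suc 0, i) f) (mon A B) =
   (if i \<in> A \<or> i \<in> B then 0 else (-1) ^ card {y \<in> A. y < i} *
      ((-1) ^ (card (insert i A) + card {y \<in> B. y < i}) * f (mon (insert i A) (insert i B))))"
  by (simp add: pd0_mon pd1_mon)

lemma R1:
  assumes "A \<subseteq> {1..n}" "B \<subseteq> {1..n}" "A \<union> B = {1..n}" "A \<inter> B = {w}"
  shows "g A B = 0"
proof -
  have fin: "finite A" "finite B" using assms(1,2) finite_subset by auto
  have w: "w \<in> {1..n}" "w \<in> A" "w \<in> B" using assms by auto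
  let ?A0 = "A - {w}" and ?B0 = "B - {w}"
  have fin0: "finite ?A0" "finite ?B0" using fin by auto
  let ?F = "\<lambda>i. pd (0, i) (pd (Suc 0, i) f) (mon ?A0 ?B0)"
  have "sum ?F {1..n} = 0" by (rule T_eqs(3)[OF T])
  moreover have "sum ?F {1..n} = ?F w + sum ?F ({1..n} - {w})"
    using w by (simp add: sum.remove)
  moreover have "sum ?F ({1..n} - {w}) = 0"
  proof (rule sum.neutral, rule ballI)
    fix i assume "i \<in> {1..n} - {w}"
    then have "i \<in> ?A0 \<or> i \<in> ?B0" using assms(3) by auto
    then show "?F i = 0" using fin0 by (simp add: pd01_mon)
  qed
  moreover have "insert w ?A0 = A" "insert w ?B0 = B" using w by auto
  ultimately have "(-1) ^ card {y \<in> ?A0. y < w} *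
      ((-1) ^ (card A + card {y \<in> ?B0. y < w}) * g A B) = (0::rat)"
    using fin0 pd01_mon[OF fin0, of w] by simp
  then show ?thesis by simp
qed

lemma alg:
  fixes p q sA sB e1 e2 x a b :: rat
  assumes "p * p = 1" "q * q = 1" "sA * sA = 1" "sB * sB = 1" "a \<ge> 0" "b \<ge> 0"
    "p * sA * e1 + (b + 1) * (p * x) = 0"
    "q * sB * e2 + (a + 1) * (q * x) = 0"
    "e2 = - (sA * sB * e1)"
  shows "x = 0 \<and> e1 = 0"
proof -
  have h1: "e1 = - ((b + 1) * sA * x)"
  proof -
    have "p * sA * (p * sA * e1 + (b + 1) * (p * x)) = 0" using assms(7) by simp
    then show ?thesis using assms(1,3) by algebra
  qed
  have h2: "e2 = - ((a + 1) * sB * x)"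
  proof -
    have "q * sB * (q * sB * e2 + (a + 1) * (q * x)) = 0" using assms(8) by simp
    then show ?thesis using assms(2,4) by algebra
  qed
  have "(a + b + 2) * x = 0" using h1 h2 assms(9,3,4) by algebra
  then have x: "x = 0" using assms(5,6) by simp
  then show ?thesis using h1 by simp
qed

end


context setting begin

lemma sign_rel:
  fixes X :: "nat set"
  assumes "finite X" "z \<notin> X" "w \<notin> X" "z \<noteq> w"
  shows "((-1::rat) ^ card {x \<in> X. x < z}) =
     (-1) ^ card {x \<in> X. x < w} * (-1) ^ card {x \<in> X. min z w < x \<and> x < max z w}"
proof (cases "z < w")
  case True
  have "card {x \<in> X. x < w} = card {x \<in> X. x < z} + card {x \<in> X. z < x \<and> x < w}"
    by (rule cnt_split) (use assms True in auto)
  then show ?thesis using True neg1_sq[of "card {x \<in> X. z < x \<and> x < w}"]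
    by (simp add: power_add mult.assoc)
next
  case False
  then have wz: "w < z" using assms by simp
  have "card {x \<in> X. x < z} = card {x \<in> X. x < w} + card {x \<in> X. w < x \<and> x < z}"
    by (rule cnt_split) (use assms wz in auto)
  then show ?thesis using wz by (simp add: power_add)
qed

lemma DE:
  assumes A': "A' \<subseteq> {1..n}" and B': "B' \<subseteq> {1..n}" and zw: "z \<in> {1..n}" "w \<in> {1..n}" "z \<noteq> w"
    and disj: "A' \<inter> B' = {}" "z \<notin> A'" "z \<notin> B'" "w \<notin> A'" "w \<notin> B'"
    and cov: "A' \<union> B' \<union> {z, w} = {1..n}"
  shows "g (insert w A') (insert w B') = 0 \<and> g (insert z A') (insert w B') = 0"
proof -
  have fA: "finite A'" using A' finite_subset by auto
  have fB: "finite B'" using B' finite_subset by auto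
  have cov': "\<And>i. i \<in> {1..n} \<Longrightarrow> i \<in> A' \<or> i \<in> B' \<or> i = z \<or> i = w"
    using cov by blast
  define A where "A = insert w A'"
  define B where "B = insert w B'"
  have fA2: "finite A" "finite B" using fA fB by (auto simp: A_def B_def)
  let ?x = "g A B" and ?e1 = "g (insert z A') B" and ?e2 = "g A (insert z B')"
  define F where "F i = (if i \<in> A' then 0 else (-1) ^ card {y \<in> A'. y < i} * g (insert i A') B)" for i
  have "(\<Sum>i = 1..n. pd (0, i) f (mon A' B)) = 0" by (rule T_eqs(1)[OF T])
  then have "sum F {1..n} = 0" by (simp add: F_def pd0_mon)
  moreover have "sum F {1..n} = sum F (insert z B)"
  proof (rule sum.mono_neutral_right)
    show "finite {1..n}" by simp
    show "insert z B \<subseteq> {1..n}" using zw B' by (auto simp: B_def)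
    show "\<forall>i\<in>{1..n} - insert z B. F i = 0"
    proof
      fix i assume "i \<in> {1..n} - insert z B"
      then have "i \<in> A'" using cov'[of i] by (auto simp: B_def)
      then show "F i = 0" by (simp add: F_def)
    qed
  qed
  moreover have "sum F (insert z B) = F z + sum F B"
    using fA2 disj zw by (simp add: B_def)
  moreover have "sum F B = sum (\<lambda>_. F w) B"
  proof (rule sum.cong[OF refl])
    fix i assume i: "i \<in> B"
    then have "i \<in> {1..n}" "i \<notin> A'" using B' zw disj by (auto simp: B_def)
    then show "F i = F w" unfolding F_def using alleq0[of i w A' B] fA fA2 i zw disj
      by (simp add: B_def)
  qed
  moreover have "card B = card B' + 1" using fB disj by (simp add: B_def)
  ultimately have eq1: "(-1) ^ card {y \<in> A'. y < z} * ?e1 + (of_nat (card B') + 1) *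
      ((-1) ^ card {y \<in> A'. y < w} * ?x) = 0"
    using disj by (simp add: F_def A_def add.commute)
  define G where "G i = (if i \<in> B' then 0 else (-1) ^ card {y \<in> B'. y < i} * g A (insert i B'))" for i
  have "(\<Sum>i = 1..n. pd (Suc 0, i) f (mon A B')) = 0" by (rule T_eqs(2)[OF T])
  moreover have "\<And>i. pd (Suc 0, i) f (mon A B') = (-1) ^ card A * G i"
    using fA2 fB by (simp add: G_def pd1_mon power_add)
  ultimately have "(\<Sum>i = 1..n. (-1) ^ card A * G i) = 0" by simp
  then have "(-1) ^ card A * sum G {1..n} = 0" by (simp add: sum_distrib_left)
  then have "sum G {1..n} = 0" by simp
  moreover have "sum G {1..n} = sum G (insert z A)"
  proof (rule sum.mono_neutral_right)
    show "finite {1..n}" by simp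
    show "insert z A \<subseteq> {1..n}" using zw A' by (auto simp: A_def)
    show "\<forall>i\<in>{1..n} - insert z A. G i = 0"
    proof
      fix i assume "i \<in> {1..n} - insert z A"
      then have "i \<in> B'" using cov'[of i] by (auto simp: A_def)
      then show "G i = 0" by (simp add: G_def)
    qed
  qed
  moreover have "sum G (insert z A) = G z + sum G A"
    using fA2 disj zw by (simp add: A_def)
  moreover have "sum G A = sum (\<lambda>_. G w) A"
  proof (rule sum.cong[OF refl])
    fix i assume i: "i \<in> A"
    then have "i \<in> {1..n}" "i \<notin> B'" using A' zw disj by (auto simp: A_def)
    then show "G i = G w" unfolding G_def using alleq1[of i w A B'] fB fA2 i zw disj
      by (simp add: A_def)
  qed
  moreover have "card A = card A' + 1" using fA disj by (simp add: A_def)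
  ultimately have eq2: "(-1) ^ card {y \<in> B'. y < z} * ?e2 + (of_nat (card A') + 1) *
      ((-1) ^ card {y \<in> B'. y < w} * ?x) = 0"
    using disj by (simp add: G_def B_def add.commute)
  let ?cA = "card {x \<in> A'. min z w < x \<and> x < max z w}"
  let ?cB = "card {x \<in> B'. min z w < x \<and> x < max z w}"
  have sw: "?e2 = - ((-1) ^ ?cA * (-1) ^ ?cB * ?e1)"
  proof (cases "z < w")
    case True
    show ?thesis using swapE[OF True zw(1,2) fA fB disj(2,4,3,5)] True
      by (simp add: A_def B_def power_add)
  next
    case False
    then have wz: "w < z" using zw by simp
    have "?e1 = - ((-1) ^ ?cA * (-1) ^ ?cB * ?e2)"
      using swapE[OF wz zw(2,1) fA fB disj(4,2,5,3)] wz
      by (simp add: A_def B_def power_add)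
    then show ?thesis using neg1_sq[of ?cA] neg1_sq[of ?cB] by (simp add: algebra_simps)
  qed
  have sz: "(-1::rat) ^ card {y \<in> A'. y < z} = (-1) ^ card {y \<in> A'. y < w} * (-1) ^ ?cA"
    by (rule sign_rel) (use fA disj zw in auto)
  have sz': "(-1::rat) ^ card {y \<in> B'. y < z} = (-1) ^ card {y \<in> B'. y < w} * (-1) ^ ?cB"
    by (rule sign_rel) (use fB disj zw in auto)
  have "?x = 0 \<and> ?e1 = 0"
  proof (rule alg[of "(-1) ^ card {y \<in> A'. y < w}" "(-1) ^ card {y \<in> B'. y < w}"
        "(-1) ^ ?cA" "(-1) ^ ?cB" "of_nat (card A')" "of_nat (card B')" ?e1 ?x ?e2])
    show "(-1) ^ card {y \<in> A'. y < w} * (-1) ^ card {y \<in> A'. y < w} = (1::rat)" by (rule neg1_sq)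
    show "(-1) ^ card {y \<in> B'. y < w} * (-1) ^ card {y \<in> B'. y < w} = (1::rat)" by (rule neg1_sq)
    show "(-1) ^ ?cA * (-1) ^ ?cA = (1::rat)" by (rule neg1_sq)
    show "(-1) ^ ?cB * (-1) ^ ?cB = (1::rat)" by (rule neg1_sq)
    show "(0::rat) \<le> of_nat (card A')" "(0::rat) \<le> of_nat (card B')" by simp_all
    show "(-1) ^ card {y \<in> A'. y < w} * (-1) ^ ?cA * ?e1 + (of_nat (card B') + 1) *
      ((-1) ^ card {y \<in> A'. y < w} * ?x) = 0" using eq1 sz by simp
    show "(-1) ^ card {y \<in> B'. y < w} * (-1) ^ ?cB * ?e2 + (of_nat (card A') + 1) *
      ((-1) ^ card {y \<in> B'. y < w} * ?x) = 0" using eq2 sz' by simp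
    show "?e2 = - ((-1) ^ ?cA * (-1) ^ ?cB * ?e1)" by (rule sw)
  qed
  then show ?thesis by (simp add: A_def B_def)
qed

end


context setting begin

lemma Etype:
  assumes n: "n \<ge> 1" and AB: "A \<subseteq> {1..n}" "B \<subseteq> {1..n}" "A \<union> B = {1..n}" "A \<inter> B = {}"
  shows "g A B = 0"
proof -
  have fA: "finite A" using AB(1) by (rule finite_subset) simp
  have fB: "finite B" using AB(2) by (rule finite_subset) simp
  show ?thesis
  proof (cases "B = {}")
    case True
    then have A: "A = {1..n}" using AB by auto
    let ?A0 = "A - {n}"
    have nA: "n \<in> A" using A n by auto
    let ?F = "\<lambda>i. pd (0, i) f (mon ?A0 {})"
    have "sum ?F {1..n} = 0" by (rule T_eqs(1)[OF T])
    moreover have "sum ?F {1..n} = ?F n + sum ?F ({1..n} - {n})"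
      using n by (intro sum.remove) auto
    moreover have "sum ?F ({1..n} - {n}) = 0"
      by (rule sum.neutral) (use A in \<open>auto simp: pd0_mon\<close>)
    moreover have "insert n ?A0 = A" using nA by auto
    ultimately have "(-1) ^ card {y \<in> ?A0. y < n} * g A {} = 0"
      by (simp add: pd0_mon)
    then show ?thesis using True by simp
  next
    case Bne: False
    show ?thesis
    proof (cases "A = {}")
      case True
      then have B: "B = {1..n}" using AB by auto
      let ?B0 = "B - {n}"
      have nB: "n \<in> B" using B n by auto
      have fB0: "finite ?B0" using fB by auto
      let ?F = "\<lambda>i. pd (Suc 0, i) f (mon {} ?B0)"
      have "sum ?F {1..n} = 0" by (rule T_eqs(2)[OF T])
      moreover have "sum ?F {1..n} = ?F n + sum ?F ({1..n} - {n})"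
        using n by (intro sum.remove) auto
      moreover have "sum ?F ({1..n} - {n}) = 0"
        by (rule sum.neutral) (use B fB0 in \<open>auto simp: pd1_mon\<close>)
      moreover have "insert n ?B0 = B" using nB by auto
      ultimately have "(-1) ^ (card ({}::nat set) + card {y \<in> ?B0. y < n}) * g {} B = 0"
        using pd1_mon[of "{}" ?B0 n f] fB0 by simp
      then show ?thesis using True by simp
    next
      case Ane: False
      obtain z where z: "z \<in> A" using Ane by blast
      obtain w where w: "w \<in> B" using Bne by blast
      have "g (insert w (A - {z})) (insert w (B - {w})) = 0 \<and>
            g (insert z (A - {z})) (insert w (B - {w})) = 0"
        by (rule DE) (use AB z w in auto)
      moreover have "insert z (A - {z}) = A" "insert w (B - {w}) = B" using z w by auto
      ultimately show ?thesis by simp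
    qed
  qed
qed

lemma two_elems:
  fixes X :: "nat set"
  assumes "finite X" "\<not> card X \<le> 1"
  obtains i j where "i < j" "i \<in> X" "j \<in> X"
proof -
  obtain a b where ab: "a \<in> X" "b \<in> X" "a \<noteq> b"
    using assms card_le_Suc0_iff_eq[of X] by auto
  show ?thesis
  proof (cases "a < b")
    case True then show ?thesis using that ab by blast
  next
    case False then have "b < a" using ab by simp
    then show ?thesis using that ab by blast
  qed
qed

lemma key:
  assumes n: "n \<ge> 1" and alg: "in_alg {0, 1} n f" and nz: "f S \<noteq> 0"
  shows "card S = n - 1"
proof -
  have Sv: "S \<subseteq> vars {0, 1} n" using alg nz unfolding in_alg_def by blast
  define A where "A = {x. (0, x) \<in> S}"
  define B where "B = {x. (Suc 0, x) \<in> S}"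
  have S: "S = mon A B" and A: "A \<subseteq> {1..n}" and B: "B \<subseteq> {1..n}"
    using mon_repr[OF Sv] unfolding A_def B_def by auto
  have fA: "finite A" and fB: "finite B" using A B finite_subset by auto
  have gz: "g A B \<noteq> 0" using nz S by simp
  have cS: "card S = card (A \<union> B) + card (A \<inter> B)"
    using S card_mon[OF fA fB] card_Un_Int[OF fA fB] by simp
  let ?C = "{1..n} - (A \<union> B)"
  have fC: "finite ?C" by simp
  have c1: "card ?C \<le> 1"
  proof (rule ccontr)
    assume "\<not> card ?C \<le> 1"
    then obtain i j where "i < j" "i \<in> ?C" "j \<in> ?C" using two_elems[OF fC] by blast
    then have "g A B = 0" by (intro two_empty) (use fA fB in auto)
    then show False using gz by simp
  qed
  have c2: "card (A \<inter> B) \<le> 1"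
  proof (rule ccontr)
    assume "\<not> card (A \<inter> B) \<le> 1"
    then obtain i j where "i < j" "i \<in> A \<inter> B" "j \<in> A \<inter> B" using two_elems[of "A \<inter> B"] fA by blast
    then have "g A B = 0" by (intro two_full) (use fA fB A in auto)
    then show False using gz by simp
  qed
  have U: "A \<union> B \<subseteq> {1..n}" using A B by auto
  have cC: "card ?C = n - card (A \<union> B)" using card_Diff_subset[OF _ U] fA fB by simp
  have cU: "card (A \<union> B) \<le> n" using card_mono[OF _ U] by simp
  show ?thesis
  proof (cases "card (A \<inter> B) = 0")
    case I0: True
    then have I: "A \<inter> B = {}" using fA by simp
    show ?thesis
    proof (cases "card ?C = 0")
      case True
      then have AU: "A \<union> B = {1..n}" using U by auto
      have "g A B = 0" by (rule Etype[OF n A B AU I])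
      then show ?thesis using gz by simp
    next
      case False
      then have "card ?C = 1" using c1 by linarith
      then show ?thesis using cS I0 cC cU by simp
    qed
  next
    case False
    then have "card (A \<inter> B) = 1" using c2 by simp
    then obtain w where w: "A \<inter> B = {w}" by (rule card_1_singletonE)
    show ?thesis
    proof (cases "card ?C = 0")
      case True
      then have AU: "A \<union> B = {1..n}" using U by auto
      have "g A B = 0" by (rule R1[OF A B AU w])
      then show ?thesis using gz by simp
    next
      case False
      then have "card ?C = 1" using c1 by linarith
      then obtain z where z: "?C = {z}" by (rule card_1_singletonE)
      have "g (insert w (A - {w})) (insert w (B - {w})) = 0 \<and>
            g (insert z (A - {w})) (insert w (B - {w})) = 0"
      proof (rule DE)
        show "A - {w} \<subseteq> {1..n}" "B - {w} \<subseteq> {1..n}" using A B by auto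
        show "z \<in> {1..n}" "z \<notin> A - {w}" "z \<notin> B - {w}" using z by auto
        show "w \<in> {1..n}" "w \<notin> A - {w}" "w \<notin> B - {w}" using w A by auto
        show "z \<noteq> w" using z w by auto
        show "(A - {w}) \<inter> (B - {w}) = {}" using w by auto
        show "(A - {w}) \<union> (B - {w}) \<union> {z, w} = {1..n}" using z w U by auto
      qed
      moreover have "insert w (A - {w}) = A" "insert w (B - {w}) = B" using w by auto
      ultimately have "g A B = 0" by simp
      then show ?thesis using gz by simp
    qed
  qed
qed

end

lemma main2:
  assumes n: "n \<ge> 1" and f: "in_alg {0, 1} n f" "f \<in> T_space n" "antisymmetric n f" "f \<noteq> (\<lambda>_. 0)"
  shows "degree_ext f = n - 1"
proof -
  interpret setting n f using f by unfold_locales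
  have K: "{card S | S. f S \<noteq> 0} = {n - 1}"
  proof
    show "{card S | S. f S \<noteq> 0} \<subseteq> {n - 1}" using key[OF n f(1)] by auto
    obtain S where "f S \<noteq> 0" using f(4) by auto
    then show "{n - 1} \<subseteq> {card S | S. f S \<noteq> 0}" using key[OF n f(1)] by force
  qed
  show ?thesis unfolding degree_ext_def K by simp
qed

theorem corollary2p4:
  fixes n :: nat
  assumes "n \<ge> 1"
  shows "(\<forall>f. in_alg {0} n f \<and> f \<in> T_space n \<and> antisymmetric n f \<and> f \<noteq> (\<lambda>_. 0)
            \<longrightarrow> degree_ext f = n - 1)
       \<and> (\<forall>f. in_alg {0, 1} n f \<and> f \<in> T_space n \<and> antisymmetric n f \<and> f \<noteq> (\<lambda>_. 0)
            \<longrightarrow> degree_ext f = n - 1)"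
proof -
  have sub: "in_alg {0} n f \<Longrightarrow> in_alg {0, 1} n f" for f
    unfolding in_alg_def vars_def by blast
  show ?thesis using main2[OF assms] sub by blast
qed



end
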